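(* Let $\mathcal{A}$ be a finite abelian group, $N\ge1$, and let $\alpha$ be a stationary $N$-step Markov measure on $\mathcal{A}^{\mathbb{Z}}$ with transition probabilities $q^{\mathbf{a}}_b=\Pr[c_N=b\mid (c_0,\dots,c_{N-1})=\mathbf{a}]$, $\mathbf{a}\in\mathcal{A}^{N}$, $b\in\mathcal{A}$. If all $q^{\mathbf{a}}_b$ are nonzero, then $\alpha$ is harmonically mixing.
   Context: An $N$-step Markov measure is a shift-invariant measure under which the distribution of each coordinate, conditioned on all previous coordinates, depends only on the previous $N$ coordinates via $q^{\mathbf{a}}_b$ (with $\sum_b q^{\mathbf{a}}_b=1$). Characters of $\mathcal{A}^{\mathbb{Z}}$ are $\chi=\bigotimes_{n}\chi_n$, $\chi_n$ characters of $\mathcal{A}$, all but finitely many trivial; rank$(\chi)$ is the number of nontrivial $\chi_n$. A measure is harmonically mixing if for every $\varepsilon>0$ there is $R$ with rank$(\chi)>R\Rightarrow|\int\chi\,d\mu|<\varepsilon$. *)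

theory Defs
  imports "HOL-Probability.Probability"
begin

definition shift_space :: "(int \<Rightarrow> 'a) measure" where
  "shift_space = PiM UNIV (\<lambda>_. count_space UNIV)"

definition character :: "('a::ab_group_add \<Rightarrow> complex) \<Rightarrow> bool" where
  "character ch \<longleftrightarrow> (\<forall>x. norm (ch x) = 1) \<and> (\<forall>x y. ch (x + y) = ch x * ch y)"

text \<open>Characters of A^Z: families of characters, all but finitely many trivial.\<close>
definition char_support :: "(int \<Rightarrow> 'a \<Rightarrow> complex) \<Rightarrow> int set" where
  "char_support ch = {n. ch n \<noteq> (\<lambda>_. 1)}"

definition shift_character :: "(int \<Rightarrow> 'a::ab_group_add \<Rightarrow> complex) \<Rightarrow> bool" where
  "shift_character ch \<longleftrightarrow> (\<forall>n. character (ch n)) \<and> finite (char_support ch)"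

definition char_rank :: "(int \<Rightarrow> 'a \<Rightarrow> complex) \<Rightarrow> nat" where
  "char_rank ch = card (char_support ch)"

definition char_eval :: "(int \<Rightarrow> 'a \<Rightarrow> complex) \<Rightarrow> (int \<Rightarrow> 'a) \<Rightarrow> complex" where
  "char_eval ch x = (\<Prod>n\<in>char_support ch. ch n (x n))"

definition harmonically_mixing :: "(int \<Rightarrow> 'a::ab_group_add) measure \<Rightarrow> bool" where
  "harmonically_mixing \<mu> \<longleftrightarrow>
     (\<forall>eps>0. \<exists>R::nat. \<forall>ch. shift_character ch \<and> char_rank ch > R \<longrightarrow>
        norm (integral\<^sup>L \<mu> (char_eval ch)) < eps)"

definition shift_invariant :: "(int \<Rightarrow> 'a) measure \<Rightarrow> bool" where
  "shift_invariant \<mu> \<longleftrightarrow> distr \<mu> shift_space (\<lambda>x n. x (n + 1)) = \<mu>"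

text \<open>N-step Markov property with transition probabilities q: conditioned on any
  finite past window of length at least N (hence on the whole past), the law of the
  next coordinate is given by q applied to the last N coordinates.  Words in A^N are
  lists of length N.  Stated via cylinder probabilities (no division by zero issues).\<close>
definition markov_measure :: "nat \<Rightarrow> ('a list \<Rightarrow> 'a \<Rightarrow> real) \<Rightarrow> (int \<Rightarrow> 'a) measure \<Rightarrow> bool" where
  "markov_measure N q \<mu> \<longleftrightarrow>
     (\<forall>(n::int) (w::'a list) (b::'a). length w \<ge> N \<longrightarrow>
        measure \<mu> {x \<in> space \<mu>. (\<forall>i<length w. x (n + int i) = w ! i) \<and> x (n + int (length w)) = b}
        = measure \<mu> {x \<in> space \<mu>. \<forall>i<length w. x (n + int i) = w ! i} * q (drop (length w - N) w) b)"

end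

theory Submission
  imports Defs
begin

lemma char_zero: assumes "character (ch::'a::ab_group_add \<Rightarrow> complex)" shows "ch 0 = 1"
proof -
  have "ch 0 = ch 0 * ch 0" using assms unfolding character_def by (metis add.right_neutral)
  moreover have "ch 0 \<noteq> 0" using assms unfolding character_def by (metis norm_zero zero_neq_one)
  ultimately show ?thesis by (metis mult_cancel_left1)
qed

lemma char_sum: assumes "character (ch::'a::ab_group_add \<Rightarrow> complex)" "finite I"
  shows "ch (\<Sum>i\<in>I. f i) = (\<Prod>i\<in>I. ch (f i))"
  using assms(2) by (induction I rule: finite_induct)
    (auto simp: char_zero[OF assms(1)] assms(1)[unfolded character_def])

lemma sum_univ_const_zero: fixes b :: "'a::{ab_group_add,finite}" shows "(\<Sum>a\<in>(UNIV::'a set). b) = 0"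
proof -
  have "(\<Sum>a\<in>(UNIV::'a set). a + b) = (\<Sum>a\<in>(UNIV::'a set). a)"
  proof (rule sum.reindex_bij_witness[where i="\<lambda>a. a - b" and j="\<lambda>a. a + b"]) qed auto
  then show ?thesis by (simp add: sum.distrib)
qed

lemma char_root: assumes "character (ch::'a::{ab_group_add,finite} \<Rightarrow> complex)"
  shows "ch b ^ CARD('a) = 1"
proof -
  have "ch (\<Sum>a\<in>(UNIV::'a set). b) = (\<Prod>a\<in>(UNIV::'a set). ch b)" by (rule char_sum[OF assms]) simp
  then show ?thesis using char_zero[OF assms] by (simp add: sum_univ_const_zero)
qed

lemma norm_one_plus_lt2: assumes "cmod z = 1" "z \<noteq> 1" shows "cmod (1 + z) < 2"
proof -
  have "(Re z)^2 + (Im z)^2 = 1" using assms(1) by (metis cmod_power2 one_power2)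
  moreover have "Re z \<noteq> 1 \<or> Im z \<noteq> 0" using assms(2) complex_eqI by fastforce
  ultimately have "Re z < 1"
  proof (cases "Re z < 1")
    case False
    then have "(Re z)^2 \<ge> 1" by (simp add: one_le_power)
    then have "(Im z)^2 \<le> 0" using \<open>(Re z)^2 + (Im z)^2 = 1\<close> by linarith
    then have "Im z = 0" by simp
    then have "(Re z)^2 = 1" using \<open>(Re z)^2 + (Im z)^2 = 1\<close> by simp
    then have "Re z = 1" using False by (simp add: power2_eq_1_iff)
    then show ?thesis using \<open>Im z = 0\<close> assms(2) complex_eqI by fastforce
  qed
  have "(cmod (1 + z))^2 = (1 + Re z)^2 + (Im z)^2" by (simp add: cmod_power2)
  also have "\<dots> < 2^2" using \<open>Re z < 1\<close> \<open>(Re z)^2 + (Im z)^2 = 1\<close> by (simp add: power2_eq_square algebra_simps)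
  finally show ?thesis by (rule power2_less_imp_less) simp
qed

lemma char_bound:
  assumes "0 < \<kappa>" "\<kappa> \<le> 1"
  shows "\<exists>\<delta>>0. \<delta> \<le> 1 \<and> (\<forall>(ph::'a::{ab_group_add,finite} \<Rightarrow> complex) \<beta>.
     character ph \<and> ph \<noteq> (\<lambda>_. 1) \<and> (\<forall>a. \<kappa> \<le> \<beta> a \<and> \<beta> a \<le> 1) \<longrightarrow>
     cmod (\<Sum>a\<in>UNIV. of_real (\<beta> a) * ph a) \<le> (1 - \<delta>) * (\<Sum>a\<in>UNIV. \<beta> a))"
proof -
  define K where "K = CARD('a)"
  have K1: "K \<ge> 1" unfolding K_def by (simp add: Suc_leI)
  define Zs where "Zs = {z::complex. z^K = 1} - {1}"
  have finZ: "finite Zs" unfolding Zs_def using finite_roots_unity[OF K1] by simp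
  have normZ: "cmod z = 1" if "z \<in> Zs" for z
  proof -
    have "z ^ K = 1" using that unfolding Zs_def by simp
    then have "cmod (z ^ K) = 1" by simp
    then have "cmod z ^ K = 1 ^ K" by (simp only: norm_power power_one)
    then show ?thesis using K1 power_eq_imp_eq_base[of "cmod z" K 1] by simp
  qed
  define e0 where "e0 = Min (insert 1 ((\<lambda>z. 2 - cmod (1+z)) ` Zs))"
  have "\<forall>z\<in>Zs. 0 < 2 - cmod (1+z)"
  proof
    fix z assume z: "z \<in> Zs"
    then have "z \<noteq> 1" by (simp add: Zs_def)
    then show "0 < 2 - cmod (1+z)" using norm_one_plus_lt2[OF normZ[OF z]] by simp
  qed
  then have e0pos: "e0 > 0" unfolding e0_def using finZ by (simp add: Min_gr_iff)
  have e0le1: "e0 \<le> 1" unfolding e0_def using finZ by simp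
  have e0le: "e0 \<le> 2 - cmod (1+z)" if "z \<in> Zs" for z
    unfolding e0_def using finZ that by (intro Min_le) auto
  define \<delta> where "\<delta> = \<kappa> * e0 / K"
  have dpos: "\<delta> > 0" unfolding \<delta>_def using assms e0pos K1 by simp
  have dle: "\<delta> \<le> 1"
  proof -
    have "\<kappa> * e0 \<le> 1" using assms e0pos e0le1 by (intro mult_le_one) auto
    moreover have "real K \<ge> 1" using K1 by simp
    ultimately show ?thesis unfolding \<delta>_def by (simp add: divide_le_eq)
  qed
  have main: "cmod (\<Sum>a\<in>UNIV. of_real (\<beta> a) * ph a) \<le> (1 - \<delta>) * (\<Sum>a\<in>UNIV. \<beta> a)"
    if ch: "character ph" and nt: "ph \<noteq> (\<lambda>_. 1)" and bb: "\<forall>a. \<kappa> \<le> \<beta> a \<and> \<beta> a \<le> 1"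
    for ph :: "'a \<Rightarrow> complex" and \<beta>
  proof -
    have bpos: "\<beta> a \<ge> 0" for a using bb assms(1) by (meson less_le_trans less_imp_le)
    obtain b0 where b0: "ph b0 \<noteq> 1" using nt by auto
    have ph0: "ph 0 = 1" by (rule char_zero[OF ch])
    have b0nz: "b0 \<noteq> 0" using b0 ph0 by auto
    define z where "z = ph b0"
    have zZ: "z \<in> Zs" unfolding Zs_def z_def K_def using char_root[OF ch] b0 by simp
    have nz: "cmod z = 1" using normZ[OF zZ] .
    define R where "R = UNIV - {0, b0}"
    have U: "(UNIV::'a set) = insert 0 (insert b0 R)" unfolding R_def by auto
    have R0: "0 \<notin> R" "b0 \<notin> R" "finite R" unfolding R_def by auto
    have SE: "(\<Sum>a\<in>UNIV. of_real (\<beta> a) * ph a) =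
        (of_real (\<beta> 0) + of_real (\<beta> b0) * z) + (\<Sum>a\<in>R. of_real (\<beta> a) * ph a)"
      by (subst U) (simp add: R0 b0nz ph0 z_def add.assoc)
    moreover have sb: "(\<Sum>a\<in>UNIV. \<beta> a) = \<beta> 0 + \<beta> b0 + (\<Sum>a\<in>R. \<beta> a)"
      by (subst U) (simp add: R0 b0nz add.assoc)
    moreover have nY: "cmod (\<Sum>a\<in>R. of_real (\<beta> a) * ph a) \<le> (\<Sum>a\<in>R. \<beta> a)"
    proof -
      have "cmod (\<Sum>a\<in>R. of_real (\<beta> a) * ph a) \<le> (\<Sum>a\<in>R. cmod (of_real (\<beta> a) * ph a))"
        by (rule norm_sum)
      also have "\<dots> = (\<Sum>a\<in>R. \<beta> a)"
        using ch unfolding character_def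
        by (intro sum.cong) (auto simp: norm_mult bpos)
      finally show ?thesis .
    qed
    moreover have nX: "cmod (of_real (\<beta> 0) + of_real (\<beta> b0) * z) \<le> \<beta> 0 + \<beta> b0 - \<kappa> * e0"
    proof -
      have eq: "of_real (\<beta> 0) + of_real (\<beta> b0) * z =
          of_real (\<beta> 0 - \<kappa>) + of_real (\<beta> b0 - \<kappa>) * z + of_real \<kappa> * (1 + z)"
        by (simp add: algebra_simps)
      have "cmod (of_real (\<beta> 0 - \<kappa>) + of_real (\<beta> b0 - \<kappa>) * z + of_real \<kappa> * (1 + z))
          \<le> cmod (of_real (\<beta> 0 - \<kappa>)) + cmod (of_real (\<beta> b0 - \<kappa>) * z) + cmod (of_real \<kappa> * (1 + z))"
        using norm_triangle_ineq[of "of_real (\<beta> 0 - \<kappa>) + of_real (\<beta> b0 - \<kappa>) * z" "of_real \<kappa> * (1 + z)"]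
          norm_triangle_ineq[of "of_real (\<beta> 0 - \<kappa>)" "of_real (\<beta> b0 - \<kappa>) * z"] by linarith
      also have "\<dots> = (\<beta> 0 - \<kappa>) + (\<beta> b0 - \<kappa>) + \<kappa> * cmod (1 + z)"
      proof -
        have "cmod (complex_of_real (\<beta> 0 - \<kappa>)) = \<beta> 0 - \<kappa>" using bb by (simp only: norm_of_real) simp
        moreover have "cmod (complex_of_real (\<beta> b0 - \<kappa>) * z) = \<beta> b0 - \<kappa>"
          using bb nz by (simp only: norm_mult norm_of_real) simp
        moreover have "cmod (complex_of_real \<kappa> * (1 + z)) = \<kappa> * cmod (1 + z)"
          using assms(1) by (simp add: norm_mult)
        ultimately show ?thesis by simp
      qed
      also have "\<dots> \<le> \<beta> 0 + \<beta> b0 - \<kappa> * e0"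
      proof -
        have "\<kappa> * cmod (1 + z) \<le> \<kappa> * (2 - e0)" using e0le[OF zZ] assms(1) by (intro mult_left_mono) auto
        then show ?thesis by (simp add: algebra_simps)
      qed
      finally show ?thesis unfolding eq .
    qed
    moreover have sK: "(\<Sum>a\<in>UNIV. \<beta> a) \<le> K"
    proof -
      have "(\<Sum>a\<in>UNIV. \<beta> a) \<le> (\<Sum>a\<in>(UNIV::'a set). 1)" using bb by (intro sum_mono) auto
      then show ?thesis by (simp add: K_def)
    qed
    moreover have "\<delta> * K = \<kappa> * e0" unfolding \<delta>_def using K1 by simp
    moreover have "\<delta> * (\<Sum>a\<in>UNIV. \<beta> a) \<le> \<delta> * K"
      using sK dpos by (intro mult_left_mono) auto
    ultimately show ?thesis unfolding SE
      using norm_triangle_ineq[of "of_real (\<beta> 0) + of_real (\<beta> b0) * z" "\<Sum>a\<in>R. of_real (\<beta> a) * ph a"] left_diff_distrib[of 1 \<delta> "\<Sum>a\<in>UNIV. \<beta> a"]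
      by linarith
  qed
  show ?thesis using dpos dle main by blast
qed

lemma sum_PiE_split:
  fixes H :: "(int \<Rightarrow> 'a::finite) \<Rightarrow> 'b::comm_monoid_add"
  assumes "finite W" "t \<in> W"
  shows "(\<Sum>w\<in>PiE W (\<lambda>_. UNIV). H w) = (\<Sum>u\<in>PiE (W - {t}) (\<lambda>_. UNIV). \<Sum>a\<in>UNIV. H (u(t:=a)))"
proof -
  have W: "W = insert t (W - {t})" using assms by auto
  have "PiE W (\<lambda>_. UNIV::'a set) = (\<lambda>(y, g). g(t := y)) ` (UNIV \<times> PiE (W - {t}) (\<lambda>_. UNIV))"
    by (subst W, subst PiE_insert_eq) simp
  moreover have "inj_on (\<lambda>(y, g). g(t := y)) ((UNIV::'a set) \<times> PiE (W - {t}) (\<lambda>_. UNIV))"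
    using inj_combinator[of t "W - {t}" "\<lambda>_. UNIV::'a set"] by simp
  ultimately have "(\<Sum>w\<in>PiE W (\<lambda>_. UNIV). H w) = (\<Sum>(y,g)\<in>(UNIV::'a set) \<times> PiE (W - {t}) (\<lambda>_. UNIV). H (g(t:=y)))"
    by (simp add: sum.reindex case_prod_unfold)
  also have "\<dots> = (\<Sum>y\<in>UNIV. \<Sum>g\<in>PiE (W - {t}) (\<lambda>_. UNIV). H (g(t:=y)))"
    by (rule sum.cartesian_product[symmetric])
  also have "\<dots> = (\<Sum>u\<in>PiE (W - {t}) (\<lambda>_. UNIV). \<Sum>a\<in>UNIV. H (u(t:=a)))"
    by (rule sum.swap)
  finally show ?thesis .
qed

lemma cond_step:
  fixes p :: "(int \<Rightarrow> 'a::finite) \<Rightarrow> real" and A B :: "(int \<Rightarrow> 'a) \<Rightarrow> real"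
    and ph :: "'a \<Rightarrow> complex" and G :: "(int \<Rightarrow> 'a) \<Rightarrow> complex"
  assumes "finite W" "t \<in> W"
    and fac: "\<And>w. p w = A w * B w" and Ainv: "\<And>w a. A (w(t:=a)) = A w"
    and Bpos: "\<And>w. B w > 0" and Ginv: "\<And>w a. G (w(t:=a)) = G w"
  shows "(\<Sum>w\<in>PiE W (\<lambda>_. UNIV). of_real (p w) * ph (w t) * G w) =
    (\<Sum>w\<in>PiE W (\<lambda>_. UNIV). of_real (p w) *
       ((\<Sum>a\<in>UNIV. of_real (B (w(t:=a))) * ph a) / of_real (\<Sum>a\<in>UNIV. B (w(t:=a)))) * G w)"
    (is "?L = ?R")
proof -
  define E where "E = (\<lambda>w. (\<Sum>a\<in>UNIV. of_real (B (w(t:=a))) * ph a) / of_real (\<Sum>a\<in>UNIV. B (w(t:=a))) :: complex)"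
  have Einv: "E (w(t:=a)) = E w" for w a unfolding E_def by simp
  have Spos: "(\<Sum>a\<in>UNIV. B (w(t:=a))) > 0" for w
    using Bpos by (intro sum_pos) auto
  have "?L = (\<Sum>u\<in>PiE (W - {t}) (\<lambda>_. UNIV). \<Sum>a\<in>UNIV. of_real (p (u(t:=a))) * ph a * G (u(t:=a)))"
    using sum_PiE_split[OF assms(1,2), of "\<lambda>w. of_real (p w) * ph (w t) * G w"] by simp
  also have "\<dots> = (\<Sum>u\<in>PiE (W - {t}) (\<lambda>_. UNIV). \<Sum>a\<in>UNIV. of_real (p (u(t:=a))) * E (u(t:=a)) * G (u(t:=a)))"
  proof (rule sum.cong[OF refl])
    fix u
    have "(\<Sum>a\<in>UNIV. of_real (p (u(t:=a))) * ph a * G (u(t:=a))) =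
        of_real (A u) * G u * (\<Sum>a\<in>UNIV. of_real (B (u(t:=a))) * ph a)"
      by (simp add: fac Ainv Ginv sum_distrib_left algebra_simps)
    also have "(\<Sum>a\<in>UNIV. of_real (B (u(t:=a))) * ph a) = E u * of_real (\<Sum>a\<in>UNIV. B (u(t:=a)))"
      unfolding E_def using Spos[of u] by (simp del: of_real_sum)
    also have "of_real (A u) * G u * (E u * of_real (\<Sum>a\<in>UNIV. B (u(t:=a)))) =
        (\<Sum>a\<in>UNIV. of_real (p (u(t:=a))) * E (u(t:=a)) * G (u(t:=a)))"
      by (simp add: fac Ainv Ginv Einv sum_distrib_left algebra_simps)
    finally show "(\<Sum>a\<in>UNIV. of_real (p (u(t:=a))) * ph a * G (u(t:=a))) =
        (\<Sum>a\<in>UNIV. of_real (p (u(t:=a))) * E (u(t:=a)) * G (u(t:=a)))" .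
  qed
  also have "\<dots> = (\<Sum>w\<in>PiE W (\<lambda>_. UNIV). of_real (p w) * E w * G w)"
    using sum_PiE_split[OF assms(1,2), of "\<lambda>w. of_real (p w) * E w * G w"] by simp
  finally show ?thesis unfolding E_def .
qed

lemma abstract_bound:
  fixes p :: "(int \<Rightarrow> 'a::{ab_group_add,finite}) \<Rightarrow> real" and A B :: "int \<Rightarrow> (int \<Rightarrow> 'a) \<Rightarrow> real"
    and ph :: "int \<Rightarrow> 'a \<Rightarrow> complex" and F :: "(int \<Rightarrow> 'a) \<Rightarrow> complex"
  assumes W: "finite W" "Tall \<subseteq> W"
    and pnn: "\<And>w. p w \<ge> 0" and psum: "(\<Sum>w\<in>PiE W (\<lambda>_. UNIV). p w) = 1"
    and fac: "\<And>t w. t \<in> Tall \<Longrightarrow> p w = A t w * B t w"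
    and Ainv: "\<And>t w a. t \<in> Tall \<Longrightarrow> A t (w(t:=a)) = A t w"
    and Bbd: "\<And>t w. t \<in> Tall \<Longrightarrow> \<kappa> \<le> B t w \<and> B t w \<le> 1"
    and Binv: "\<And>t s w c. t \<in> Tall \<Longrightarrow> s \<in> Tall \<Longrightarrow> s \<noteq> t \<Longrightarrow> B t (w(s:=c)) = B t w"
    and chars: "\<And>t. t \<in> Tall \<Longrightarrow> character (ph t) \<and> ph t \<noteq> (\<lambda>_. 1)"
    and kpos: "0 < \<kappa>" and dle: "\<delta> \<le> 1"
    and dprop: "\<forall>(f::'a \<Rightarrow> complex) \<beta>. character f \<and> f \<noteq> (\<lambda>_. 1) \<and> (\<forall>a. \<kappa> \<le> \<beta> a \<and> \<beta> a \<le> 1) \<longrightarrow>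
       cmod (\<Sum>a\<in>UNIV. of_real (\<beta> a) * f a) \<le> (1 - \<delta>) * (\<Sum>a\<in>UNIV. \<beta> a)"
    and T: "T \<subseteq> Tall"
    and Finv: "\<And>w s c. s \<in> T \<Longrightarrow> F (w(s:=c)) = F w"
    and Fbd: "\<And>w. cmod (F w) \<le> Bd"
  shows "cmod (\<Sum>w\<in>PiE W (\<lambda>_. UNIV). of_real (p w) * (\<Prod>s\<in>T. ph s (w s)) * F w) \<le> (1 - \<delta>) ^ card T * Bd"
proof -
  have "finite T" using W T by (meson finite_subset)
  then show ?thesis using T Finv Fbd
  proof (induction T arbitrary: F Bd rule: finite_induct)
    case empty
    have "cmod (\<Sum>w\<in>PiE W (\<lambda>_. UNIV). of_real (p w) * (\<Prod>s\<in>{}. ph s (w s)) * F w)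
        \<le> (\<Sum>w\<in>PiE W (\<lambda>_. UNIV). cmod (of_real (p w) * (\<Prod>s\<in>{}. ph s (w s)) * F w))"
      by (rule norm_sum)
    also have "\<dots> \<le> (\<Sum>w\<in>PiE W (\<lambda>_. UNIV). p w * Bd)"
    proof (rule sum_mono)
      fix w
      have "cmod (of_real (p w) * (\<Prod>s\<in>{}. ph s (w s)) * F w) = p w * cmod (F w)"
        using pnn[of w] by (simp add: norm_mult)
      also have "\<dots> \<le> p w * Bd" using pnn[of w] empty.prems(3)[of w] by (intro mult_left_mono) auto
      finally show "cmod (of_real (p w) * (\<Prod>s\<in>{}. ph s (w s)) * F w) \<le> p w * Bd" .
    qed
    also have "\<dots> = Bd" using psum by (simp add: sum_distrib_right[symmetric])
    finally show ?case by simp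
  next
    case (insert t T0)
    have tT: "t \<in> Tall" using insert.prems(1) by auto
    have tW: "t \<in> W" using tT W by auto
    have Bpos: "B t w > 0" for w using Bbd[OF tT, of w] kpos by linarith
    define E where "E = (\<lambda>w. (\<Sum>a\<in>UNIV. of_real (B t (w(t:=a))) * ph t a) / of_real (\<Sum>a\<in>UNIV. B t (w(t:=a))) :: complex)"
    define G where "G = (\<lambda>w. (\<Prod>s\<in>T0. ph s (w s)) * F w)"
    have Ginv: "G (w(t:=a)) = G w" for w a
    proof -
      have P: "(\<Prod>s\<in>T0. ph s ((w(t:=a)) s)) = (\<Prod>s\<in>T0. ph s (w s))"
        using insert.hyps(2) by (intro prod.cong) auto
      have Fi: "F (w(t:=a)) = F w" using insert.prems(2)[of t w a] by (meson insertI1)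
      show ?thesis unfolding G_def by (simp only: P Fi)
    qed
    have "(\<Sum>w\<in>PiE W (\<lambda>_. UNIV). of_real (p w) * (\<Prod>s\<in>insert t T0. ph s (w s)) * F w)
        = (\<Sum>w\<in>PiE W (\<lambda>_. UNIV). of_real (p w) * ph t (w t) * G w)"
      using insert.hyps by (simp add: G_def algebra_simps)
    also have "\<dots> = (\<Sum>w\<in>PiE W (\<lambda>_. UNIV). of_real (p w) * E w * G w)"
      unfolding E_def by (rule cond_step[OF W(1) tW fac[OF tT] Ainv[OF tT] Bpos Ginv])
    also have "\<dots> = (\<Sum>w\<in>PiE W (\<lambda>_. UNIV). of_real (p w) * (\<Prod>s\<in>T0. ph s (w s)) * (E w * F w))"
      by (simp add: G_def algebra_simps)
    finally have eq: "(\<Sum>w\<in>PiE W (\<lambda>_. UNIV). of_real (p w) * (\<Prod>s\<in>insert t T0. ph s (w s)) * F w)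
       = (\<Sum>w\<in>PiE W (\<lambda>_. UNIV). of_real (p w) * (\<Prod>s\<in>T0. ph s (w s)) * (E w * F w))" .
    have Einv: "E (w(s:=c)) = E w" if "s \<in> T0" for w s c
    proof -
      have sT: "s \<in> Tall" "s \<noteq> t" using that insert.prems(1) insert.hyps(2) by auto
      have "B t ((w(s:=c))(t:=a)) = B t (w(t:=a))" for a
        using Binv[OF tT sT(1) sT(2), of "w(t:=a)" c] sT(2) by (simp add: fun_upd_twist)
      then show ?thesis unfolding E_def by simp
    qed
    have Ebd: "cmod (E w) \<le> 1 - \<delta>" for w
    proof -
      have "cmod (\<Sum>a\<in>UNIV. of_real (B t (w(t:=a))) * ph t a) \<le> (1 - \<delta>) * (\<Sum>a\<in>UNIV. B t (w(t:=a)))"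
        using dprop chars[OF tT] Bbd[OF tT] by presburger
      moreover have "(\<Sum>a\<in>UNIV. B t (w(t:=a))) > 0" using Bpos by (intro sum_pos) auto
      ultimately show ?thesis unfolding E_def by (simp add: norm_divide divide_le_eq del: of_real_sum)
    qed
    have Bd0: "Bd \<ge> 0" using insert.prems(3)[of undefined] by (meson norm_ge_zero order_trans)
    have "cmod (\<Sum>w\<in>PiE W (\<lambda>_. UNIV). of_real (p w) * (\<Prod>s\<in>T0. ph s (w s)) * (E w * F w))
        \<le> (1 - \<delta>) ^ card T0 * ((1 - \<delta>) * Bd)"
    proof (rule insert.IH)
      show "T0 \<subseteq> Tall" using insert.prems(1) by auto
      show "E (w(s:=c)) * F (w(s:=c)) = E w * F w" if "s \<in> T0" for w s c
      proof -
        have "F (w(s:=c)) = F w" using insert.prems(2)[of s w c] that by (meson insertI2)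
        then show ?thesis using Einv[OF that] by (simp only:)
      qed
      show "cmod (E w * F w) \<le> (1 - \<delta>) * Bd" for w
        unfolding norm_mult using Ebd[of w] insert.prems(3)[of w] dle Bd0
        by (intro mult_mono) auto
    qed
    then show ?case using eq insert.hyps by (simp add: algebra_simps)
  qed
qed

locale mk =
  fixes \<mu> :: "(int \<Rightarrow> 'a::{ab_group_add,finite}) measure" and N :: nat and q :: "'a list \<Rightarrow> 'a \<Rightarrow> real"
  assumes ps: "prob_space \<mu>" and sets_eq: "sets \<mu> = sets shift_space" and N1: "N \<ge> 1"
    and qsum: "\<And>a. length a = N \<Longrightarrow> (\<Sum>b\<in>UNIV. q a b) = 1"
    and mkv: "markov_measure N q \<mu>" and qnz: "\<And>a b. length a = N \<Longrightarrow> q a b \<noteq> 0"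
begin

lemma space_eq: "space \<mu> = UNIV"
proof -
  have "space \<mu> = space shift_space" by (rule sets_eq_imp_space_eq[OF sets_eq])
  also have "\<dots> = UNIV" unfolding shift_space_def space_PiM PiE_UNIV_domain by auto
  finally show ?thesis .
qed

definition cyl :: "int set \<Rightarrow> (int \<Rightarrow> 'a) \<Rightarrow> (int \<Rightarrow> 'a) set" where
  "cyl W w = {x \<in> space \<mu>. \<forall>i\<in>W. x i = w i}"

definition pr :: "int set \<Rightarrow> (int \<Rightarrow> 'a) \<Rightarrow> real" where
  "pr W w = measure \<mu> (cyl W w)"

lemma coord_meas: "(\<lambda>x. x i) \<in> measurable \<mu> (count_space UNIV)"
proof -
  have "(\<lambda>x. x i) \<in> measurable shift_space (count_space UNIV)"
    unfolding shift_space_def by (rule measurable_component_singleton) simp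
  then show ?thesis using measurable_cong_sets[OF sets_eq refl] by blast
qed

lemma cyl_sets: assumes "finite W" shows "cyl W w \<in> sets \<mu>"
proof -
  have "{x \<in> space \<mu>. x i = w i} \<in> sets \<mu>" for i
  proof -
    have "(\<lambda>x. x i) -` {w i} \<inter> space \<mu> \<in> sets \<mu>"
      by (rule measurable_sets[OF coord_meas]) simp
    moreover have "(\<lambda>x. x i) -` {w i} \<inter> space \<mu> = {x \<in> space \<mu>. x i = w i}" by auto
    ultimately show ?thesis by simp
  qed
  then show ?thesis unfolding cyl_def using assms by (intro sets.sets_Collect_finite_All) auto
qed

lemma pr_nonneg: "pr W w \<ge> 0" unfolding pr_def by simp

lemma pr_cong: "(\<And>i. i \<in> W \<Longrightarrow> w i = w' i) \<Longrightarrow> pr W w = pr W w'"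
  unfolding pr_def cyl_def by (rule arg_cong[where f="measure \<mu>"]) auto

lemma integral_as_sum:
  fixes f :: "(int \<Rightarrow> 'a) \<Rightarrow> 'b::{banach, second_countable_topology}"
  assumes W: "finite W" and f: "\<And>x y. (\<And>i. i \<in> W \<Longrightarrow> x i = y i) \<Longrightarrow> f x = f y"
  shows "integral\<^sup>L \<mu> f = (\<Sum>w\<in>PiE W (\<lambda>_. UNIV). pr W w *\<^sub>R f w)"
proof -
  interpret prob_space \<mu> by (rule ps)
  have fx: "f x = (\<Sum>w\<in>PiE W (\<lambda>_. UNIV). indicator (cyl W w) x *\<^sub>R f w)" for x
  proof -
    define w0 where "w0 = restrict x W"
    have w0C: "w0 \<in> PiE W (\<lambda>_. UNIV)" unfolding w0_def by simp
    have ind: "indicator (cyl W w) x = (if w = w0 then 1 else (0::real))" if "w \<in> PiE W (\<lambda>_. UNIV)" for w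
    proof -
      have "x \<in> cyl W w \<longleftrightarrow> w = w0"
      proof
        assume "x \<in> cyl W w"
        then have "\<forall>i\<in>W. x i = w i" unfolding cyl_def by auto
        then show "w = w0" unfolding w0_def using that by (auto simp: PiE_def extensional_def fun_eq_iff)
      next
        assume "w = w0" then show "x \<in> cyl W w" unfolding cyl_def w0_def space_eq by auto
      qed
      then show ?thesis by (simp add: indicator_def)
    qed
    have "(\<Sum>w\<in>PiE W (\<lambda>_. UNIV). indicator (cyl W w) x *\<^sub>R f w) =
        (\<Sum>w\<in>PiE W (\<lambda>_. UNIV). (if w = w0 then f w else 0))"
      by (intro sum.cong) (auto simp: ind)
    also have "\<dots> = f w0" using w0C W by (simp add: finite_PiE)
    also have "\<dots> = f x" by (rule f) (simp add: w0_def)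
    finally show ?thesis by simp
  qed
  have "integral\<^sup>L \<mu> f = integral\<^sup>L \<mu> (\<lambda>x. \<Sum>w\<in>PiE W (\<lambda>_. UNIV). indicator (cyl W w) x *\<^sub>R f w)"
    by (rule arg_cong[where f="integral\<^sup>L \<mu>"]) (rule ext, rule fx)
  also have "\<dots> = (\<Sum>w\<in>PiE W (\<lambda>_. UNIV). integral\<^sup>L \<mu> (\<lambda>x. indicator (cyl W w) x *\<^sub>R f w))"
    by (rule Bochner_Integration.integral_sum[where I="PiE W (\<lambda>_. UNIV)" and M=\<mu> and f="\<lambda>w x. indicator (cyl W w) x *\<^sub>R f w"]) (auto intro!: integrable_scaleR_left integrable_real_indicator cyl_sets[OF W] simp: emeasure_finite less_top[symmetric])
  also have "\<dots> = (\<Sum>w\<in>PiE W (\<lambda>_. UNIV). pr W w *\<^sub>R f w)"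
  proof (intro sum.cong refl)
    fix w
    have "cyl W w \<inter> space \<mu> = cyl W w" unfolding cyl_def by auto
    show "integral\<^sup>L \<mu> (\<lambda>x. indicator (cyl W w) x *\<^sub>R f w) = pr W w *\<^sub>R f w"
    proof -
      have "integrable \<mu> (indicator (cyl W w) :: _ \<Rightarrow> real)"
        by (intro integrable_real_indicator cyl_sets[OF W]) (simp add: emeasure_finite less_top[symmetric])
      then show ?thesis using \<open>cyl W w \<inter> space \<mu> = cyl W w\<close> by (simp add: pr_def)
    qed
  qed
  finally show ?thesis .
qed

lemma pr_sum: assumes "finite W" shows "(\<Sum>w\<in>PiE W (\<lambda>_. UNIV). pr W w) = 1"
proof -
  interpret prob_space \<mu> by (rule ps)
  have "integral\<^sup>L \<mu> (\<lambda>_. 1::real) = (\<Sum>w\<in>PiE W (\<lambda>_. UNIV). pr W w *\<^sub>R (1::real))"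
    by (rule integral_as_sum[OF assms]) simp
  then show ?thesis by (simp add: prob_space)
qed

end

context mk begin

definition Q :: "int \<Rightarrow> (int \<Rightarrow> 'a) \<Rightarrow> real" where
  "Q j w = q (map (\<lambda>k. w (j - int N + int k)) [0..<N]) (w j)"

lemma cyl_list: "{x \<in> space \<mu>. \<forall>i<n. x (L + int i) = w (L + int i)} = cyl {L..L + int n - 1} w"
proof -
  have "(\<forall>i<n. x (L + int i) = w (L + int i)) \<longleftrightarrow> (\<forall>j\<in>{L..L + int n - 1}. x j = w j)" for x
  proof
    assume H: "\<forall>i<n. x (L + int i) = w (L + int i)"
    show "\<forall>j\<in>{L..L + int n - 1}. x j = w j"
    proof
      fix j assume "j \<in> {L..L + int n - 1}"
      then have "nat (j - L) < n" "L + int (nat (j - L)) = j" by auto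
      then show "x j = w j" using H by metis
    qed
  qed auto
  then show ?thesis unfolding cyl_def by auto
qed

lemma markov_step:
  assumes "length v \<ge> N"
  shows "measure \<mu> {x \<in> space \<mu>. \<forall>i<length (v @ [b]). x (n + int i) = (v @ [b]) ! i} =
    measure \<mu> {x \<in> space \<mu>. \<forall>i<length v. x (n + int i) = v ! i} * q (drop (length v - N) v) b"
proof -
  have "{x \<in> space \<mu>. \<forall>i<length (v @ [b]). x (n + int i) = (v @ [b]) ! i} =
     {x \<in> space \<mu>. (\<forall>i<length v. x (n + int i) = v ! i) \<and> x (n + int (length v)) = b}"
    by (auto simp: nth_append less_Suc_eq)
  then show ?thesis using mkv assms unfolding markov_measure_def by simp
qed

lemma prod_formula:
  "pr {L..L + int N - 1 + int n} w = pr {L..L + int N - 1} w * (\<Prod>j\<in>{L + int N..L + int N - 1 + int n}. Q j w)"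
proof (induction n)
  case 0
  then show ?case by simp
next
  case (Suc n)
  define U where "U = L + int N - 1 + int n"
  define v where "v = map (\<lambda>i. w (L + int i)) [0..<N + n]"
  have lv: "length v = N + n" unfolding v_def by simp
  have s1: "{x \<in> space \<mu>. \<forall>i<length (v @ [w (U+1)]). x (L + int i) = (v @ [w (U+1)]) ! i} = cyl {L..U+1} w"
  proof -
    have "{x \<in> space \<mu>. \<forall>i<length (v @ [w (U+1)]). x (L + int i) = (v @ [w (U+1)]) ! i}
        = {x \<in> space \<mu>. \<forall>i<N + n + 1. x (L + int i) = w (L + int i)}"
      unfolding v_def U_def by (auto simp: nth_append less_Suc_eq algebra_simps)
    also have "\<dots> = cyl {L..L + int (N + n + 1) - 1} w" by (rule cyl_list)
    finally show ?thesis unfolding U_def by (simp add: algebra_simps)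
  qed
  have s2: "{x \<in> space \<mu>. \<forall>i<length v. x (L + int i) = v ! i} = cyl {L..U} w"
  proof -
    have "{x \<in> space \<mu>. \<forall>i<length v. x (L + int i) = v ! i}
        = {x \<in> space \<mu>. \<forall>i<N + n. x (L + int i) = w (L + int i)}"
      unfolding v_def by auto
    also have "\<dots> = cyl {L..L + int (N + n) - 1} w" by (rule cyl_list)
    finally show ?thesis unfolding U_def by (simp add: algebra_simps)
  qed
  have dr: "drop (length v - N) v = map (\<lambda>k. w (U + 1 - int N + int k)) [0..<N]"
    unfolding lv by (rule nth_equalityI) (auto simp: v_def U_def algebra_simps)
  have "pr {L..U+1} w = pr {L..U} w * Q (U+1) w"
    using markov_step[of v "w (U+1)" L] lv s1 s2 dr unfolding pr_def Q_def by simp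
  moreover have "{L + int N..U + 1} = insert (U+1) {L + int N..U}" unfolding U_def by auto
  ultimately have "pr {L..U+1} w = pr {L..L + int N - 1} w * (\<Prod>j\<in>{L + int N..U+1}. Q j w)"
    using Suc.IH unfolding U_def by (simp add: algebra_simps)
  then show ?case unfolding U_def by (simp add: algebra_simps)
qed

lemma prod_formula':
  assumes "L + int N - 1 \<le> U"
  shows "pr {L..U} w = pr {L..L + int N - 1} w * (\<Prod>j\<in>{L + int N..U}. Q j w)"
  using prod_formula[of L "nat (U - (L + int N - 1))" w] assms by simp

end

context mk begin

definition ml :: "'a list \<Rightarrow> real" where
  "ml v = measure \<mu> {x \<in> space \<mu>. \<forall>i<length v. x (0 + int i) = v ! i}"

lemma ml_step: "length v \<ge> N \<Longrightarrow> ml (v @ [b]) = ml v * q (drop (length v - N) v) b"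
  unfolding ml_def by (rule markov_step)

lemma ml_nonneg: "ml v \<ge> 0" unfolding ml_def by simp

lemma exists_pos_start: "\<exists>u. length u = N \<and> ml u > 0"
proof -
  define W where "W = {0..(0::int) + int N - 1}"
  have fW: "finite W" unfolding W_def by simp
  have "(\<Sum>w\<in>PiE W (\<lambda>_. UNIV). pr W w) = 1" by (rule pr_sum[OF fW])
  then have "\<exists>w. pr W w > 0"
  proof (rule contrapos_pp)
    assume "\<not> (\<exists>w. pr W w > 0)"
    then have "\<And>w. pr W w \<le> 0" by (simp add: not_less)
    then have "(\<Sum>w\<in>PiE W (\<lambda>_. UNIV). pr W w) \<le> 0" by (simp add: sum_nonpos)
    then show "(\<Sum>w\<in>PiE W (\<lambda>_. UNIV). pr W w) \<noteq> 1" by simp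
  qed
  then obtain w where "pr W w > 0" by blast
  define u where "u = map (\<lambda>i. w (0 + int i)) [0..<N]"
  have "ml u = pr W w"
  proof -
    have "{x \<in> space \<mu>. \<forall>i<length u. x (0 + int i) = u ! i} = {x \<in> space \<mu>. \<forall>i<N. x (0 + int i) = w (0 + int i)}"
      unfolding u_def by auto
    also have "\<dots> = cyl W w" unfolding W_def by (rule cyl_list)
    finally show ?thesis unfolding ml_def pr_def by simp
  qed
  moreover have "length u = N" unfolding u_def by simp
  ultimately show ?thesis using \<open>pr W w > 0\<close> by metis
qed

lemma q_pos: assumes "length a = N" shows "q a b > 0"
proof -
  obtain u where u: "length u = N" "ml u > 0" using exists_pos_start by blast
  have all: "ml (u @ v) > 0" for v
  proof (induction v rule: rev_induct)
    case Nil then show ?case using u by simp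
  next
    case (snoc c v)
    define a' where "a' = drop (length (u @ v) - N) (u @ v)"
    have la: "length a' = N" unfolding a'_def using u by simp
    have e: "ml ((u @ v) @ [c]) = ml (u @ v) * q a' c" unfolding a'_def by (rule ml_step) (simp add: u)
    have "q a' c \<ge> 0"
    proof (rule ccontr)
      assume "\<not> q a' c \<ge> 0"
      then have "ml (u @ v) * q a' c < 0" using snoc.IH by (simp add: mult_pos_neg)
      then show False using e ml_nonneg[of "(u @ v) @ [c]"] by simp
    qed
    then have "q a' c > 0" using qnz[OF la, of c] by linarith
    then show ?case using e snoc.IH by simp
  qed
  have e: "ml ((u @ a) @ [b]) = ml (u @ a) * q (drop (length (u @ a) - N) (u @ a)) b"
    by (rule ml_step) (simp add: u)
  have "drop (length (u @ a) - N) (u @ a) = a" using u assms by simp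
  then have e2: "ml ((u @ a) @ [b]) = ml (u @ a) * q a b" using e by simp
  have "q a b \<ge> 0"
  proof (rule ccontr)
    assume "\<not> q a b \<ge> 0"
    then have "ml (u @ a) * q a b < 0" using all[of a] by (simp add: mult_pos_neg)
    then show False using e2 ml_nonneg[of "(u @ a) @ [b]"] by simp
  qed
  then show ?thesis using qnz[OF assms, of b] by linarith
qed

lemma q_le1: assumes "length a = N" shows "q a b \<le> 1"
proof -
  have "q a b \<le> (\<Sum>b\<in>UNIV. q a b)" by (rule member_le_sum) (auto intro: less_imp_le q_pos[OF assms])
  then show ?thesis using qsum[OF assms] by simp
qed

definition qmin :: real where
  "qmin = Min ((\<lambda>(a, b). q a b) ` ({a. length a = N} \<times> UNIV))"

lemma qmin: "qmin > 0" "length a = N \<Longrightarrow> qmin \<le> q a b"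
proof -
  have fin: "finite ((\<lambda>(a, b). q a b) ` ({a::'a list. length a = N} \<times> (UNIV::'a set)))"
  proof -
    have "finite {xs::'a list. set xs \<subseteq> UNIV \<and> length xs = N}" by (rule finite_lists_length_eq) simp
    then show ?thesis by (intro finite_imageI finite_cartesian_product) auto
  qed
  have ne: "((\<lambda>(a, b). q a b) ` ({a::'a list. length a = N} \<times> (UNIV::'a set))) \<noteq> {}"
    by (auto intro: exI[of _ "replicate N 0"])
  show "qmin > 0" unfolding qmin_def using fin ne by (auto simp: Min_gr_iff q_pos)
  show "length a = N \<Longrightarrow> qmin \<le> q a b" unfolding qmin_def using fin by (intro Min_le) auto
qed

lemma Q_bounds: "qmin \<le> Q j w" "Q j w \<le> 1"
  unfolding Q_def by (auto intro: qmin q_le1)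

lemma Q_cong: "(\<And>i. j - int N \<le> i \<Longrightarrow> i \<le> j \<Longrightarrow> w i = w' i) \<Longrightarrow> Q j w = Q j w'"
  unfolding Q_def by (intro arg_cong2[where f=q] map_cong) auto

end

lemma spaced_subset:
  fixes S :: "int set" and N :: nat
  assumes "finite S"
  shows "\<exists>T\<subseteq>S. (\<forall>s\<in>T. \<forall>t\<in>T. s \<noteq> t \<longrightarrow> int N < \<bar>s - t\<bar>) \<and> card S \<le> (N+1) * card T"
  using assms
proof (induction "card S" arbitrary: S rule: less_induct)
  case less
  show ?case
  proof (cases "S = {}")
    case True then show ?thesis by auto
  next
    case False
    define s where "s = Max S"
    define S' where "S' = S - {s - int N..s}"
    have sS: "s \<in> S" unfolding s_def using False less.prems by simp
    have sge: "t \<le> s" if "t \<in> S" for t unfolding s_def using less.prems that by simp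
    have fS': "finite S'" unfolding S'_def using less.prems by simp
    have sS': "s \<notin> S'" unfolding S'_def by simp
    have "S' \<subseteq> S" unfolding S'_def by auto
    moreover have "S' \<noteq> S" using sS sS' by metis
    ultimately have "S' \<subset> S" by (rule psubsetI)
    then have "card S' < card S" using less.prems by (simp add: psubset_card_mono)
    then obtain T' where T': "T' \<subseteq> S'" "\<forall>s\<in>T'. \<forall>t\<in>T'. s \<noteq> t \<longrightarrow> int N < \<bar>s - t\<bar>"
      "card S' \<le> (N+1) * card T'"
      using less.hyps[OF \<open>card S' < card S\<close> fS'] by auto
    have fT': "finite T'" using T'(1) fS' finite_subset by auto
    have sT': "s \<notin> T'" using T'(1) sS' by auto
    define T where "T = insert s T'"
    have cT: "card T = Suc (card T')" unfolding T_def using fT' sT' by simp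
    have "S \<subseteq> S' \<union> {s - int N..s}" unfolding S'_def by auto
    then have "card S \<le> card (S' \<union> {s - int N..s})" using fS' by (intro card_mono) auto
    also have "\<dots> \<le> card S' + card {s - int N..s}" by (rule card_Un_le)
    also have "card {s - int N..s} = N + 1" by simp
    finally have cS: "card S \<le> card S' + (N + 1)" .
    have far: "int N < \<bar>s - t\<bar>" if "t \<in> T'" for t
    proof -
      have "t \<in> S" "t \<notin> {s - int N..s}" using that T'(1) unfolding S'_def by auto
      then have "t < s - int N" using sge[of t] by auto
      then show ?thesis by simp
    qed
    have "T \<subseteq> S" unfolding T_def using T'(1) sS unfolding S'_def by auto
    moreover have "\<forall>a\<in>T. \<forall>b\<in>T. a \<noteq> b \<longrightarrow> int N < \<bar>a - b\<bar>"
      unfolding T_def using T'(2) far by (auto simp: abs_minus_commute)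
    moreover have "card S \<le> (N+1) * card T" using cS T'(3) cT by simp
    ultimately show ?thesis by (intro exI[of _ T]) simp
  qed
qed

context mk begin

lemma qmin_le1: "qmin \<le> 1"
  using qmin(2)[of "replicate N 0" 0] q_le1[of "replicate N 0" 0] by simp

theorem hm: "harmonically_mixing \<mu>"
  unfolding harmonically_mixing_def
proof (intro allI impI)
  fix eps :: real assume eps: "eps > 0"
  define \<kappa> where "\<kappa> = qmin ^ (N+1)"
  have kpos: "\<kappa> > 0" unfolding \<kappa>_def using qmin(1) by simp
  have kle: "\<kappa> \<le> 1" unfolding \<kappa>_def using qmin(1) qmin_le1 by (intro power_le_one) auto
  obtain \<delta> where dpos: "\<delta> > 0" and dle: "\<delta> \<le> 1" and dprop:
    "\<forall>(f::'a \<Rightarrow> complex) \<beta>. character f \<and> f \<noteq> (\<lambda>_. 1) \<and> (\<forall>a. \<kappa> \<le> \<beta> a \<and> \<beta> a \<le> 1) \<longrightarrow>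
       cmod (\<Sum>a\<in>UNIV. of_real (\<beta> a) * f a) \<le> (1 - \<delta>) * (\<Sum>a\<in>UNIV. \<beta> a)"
    using char_bound[OF kpos kle] by blast
  have "(\<lambda>n. (1 - \<delta>) ^ n) \<longlonglongrightarrow> 0" using dpos dle by (intro LIMSEQ_power_zero) simp
  then have "eventually (\<lambda>n. (1 - \<delta>) ^ n < eps) sequentially" using eps by (rule order_tendstoD)
  then obtain k0 where k0: "(1 - \<delta>) ^ k0 < eps" by (auto simp: eventually_sequentially)
  show "\<exists>R. \<forall>ch. shift_character ch \<and> R < char_rank ch \<longrightarrow> norm (integral\<^sup>L \<mu> (char_eval ch)) < eps"
  proof (intro exI[of _ "(N+1) * k0"] allI impI)
    fix ch :: "int \<Rightarrow> 'a \<Rightarrow> complex"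
    assume H: "shift_character ch \<and> (N+1) * k0 < char_rank ch"
    define S where "S = char_support ch"
    have fS: "finite S" using H unfolding S_def shift_character_def by simp
    have chc: "character (ch n)" for n using H unfolding shift_character_def by simp
    obtain T where T: "T \<subseteq> S" "\<forall>s\<in>T. \<forall>t\<in>T. s \<noteq> t \<longrightarrow> int N < \<bar>s - t\<bar>" "card S \<le> (N+1) * card T"
      using spaced_subset[OF fS, of N] by blast
    have kT: "k0 \<le> card T"
    proof -
      have "(N+1) * k0 < (N+1) * card T" using H T(3) unfolding char_rank_def S_def by simp
      then show ?thesis using mult_less_cancel1[of "N+1" k0 "card T"] by simp
    qed
    define M where "M = (\<Sum>s\<in>S. \<bar>s\<bar>)"
    have Mb: "\<bar>s\<bar> \<le> M" if "s \<in> S" for s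
      unfolding M_def using fS that by (intro member_le_sum) auto
    define L where "L = - M - int N"
    define U where "U = M + int N"
    define W where "W = {L..U}"
    have fW: "finite W" unfolding W_def by simp
    have M0: "M \<ge> 0" unfolding M_def by (simp add: sum_nonneg)
    have SW: "S \<subseteq> W"
    proof
      fix s assume "s \<in> S"
      then have "\<bar>s\<bar> \<le> M" by (rule Mb)
      then show "s \<in> W" unfolding W_def L_def U_def by (simp add: abs_le_iff)
    qed
    have TW: "T \<subseteq> W" using T(1) SW by auto
    have Trange: "L + int N \<le> t" "t + int N \<le> U" if "t \<in> T" for t
      using Mb[of t] that T(1) unfolding L_def U_def by auto
    have LU: "L + int N - 1 \<le> U" unfolding L_def U_def using M0 by simp
    define F where "F = (\<lambda>w. \<Prod>s\<in>S - T. ch s (w s))"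
    define A where "A = (\<lambda>t w. pr {L..L + int N - 1} w * (\<Prod>j\<in>{L + int N..U} - {t..t + int N}. Q j w))"
    define B where "B = (\<lambda>t w. \<Prod>j\<in>{t..t + int N}. Q j w)"
    have ce: "char_eval ch w = of_real 1 * (\<Prod>s\<in>T. ch s (w s)) * F w" for w
      unfolding char_eval_def F_def S_def[symmetric]
      using prod.subset_diff[OF T(1) fS, of "\<lambda>s. ch s (w s)"] by (simp add: mult.commute)
    have int_eq: "integral\<^sup>L \<mu> (char_eval ch) = (\<Sum>w\<in>PiE W (\<lambda>_. UNIV). of_real (pr W w) * (\<Prod>s\<in>T. ch s (w s)) * F w)"
    proof -
      have "integral\<^sup>L \<mu> (char_eval ch) = (\<Sum>w\<in>PiE W (\<lambda>_. UNIV). pr W w *\<^sub>R char_eval ch w)"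
      proof (rule integral_as_sum[OF fW])
        fix x y :: "int \<Rightarrow> 'a" assume "\<And>i. i \<in> W \<Longrightarrow> x i = y i"
        then show "char_eval ch x = char_eval ch y"
          unfolding char_eval_def S_def[symmetric] using SW by (intro prod.cong) auto
      qed
      also have "\<dots> = (\<Sum>w\<in>PiE W (\<lambda>_. UNIV). of_real (pr W w) * (\<Prod>s\<in>T. ch s (w s)) * F w)"
        by (intro sum.cong refl) (simp add: ce scaleR_conv_of_real)
      finally show ?thesis .
    qed
    have bound: "cmod (\<Sum>w\<in>PiE W (\<lambda>_. UNIV). of_real (pr W w) * (\<Prod>s\<in>T. ch s (w s)) * F w) \<le> (1 - \<delta>) ^ card T * 1"
    proof (rule abstract_bound[where A=A and B=B and \<kappa>=\<kappa> and Tall=T])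
      show "finite W" by (rule fW)
      show "T \<subseteq> W" by (rule TW)
      show "\<And>w. pr W w \<ge> 0" by (rule pr_nonneg)
      show "(\<Sum>w\<in>PiE W (\<lambda>_. UNIV). pr W w) = 1" by (rule pr_sum[OF fW])
      show "pr W w = A t w * B t w" if "t \<in> T" for t w
      proof -
        have sub: "{t..t + int N} \<subseteq> {L + int N..U}" using Trange[OF that] by auto
        have "pr W w = pr {L..L + int N - 1} w * (\<Prod>j\<in>{L + int N..U}. Q j w)"
          unfolding W_def by (rule prod_formula'[OF LU])
        also have "(\<Prod>j\<in>{L + int N..U}. Q j w) = (\<Prod>j\<in>{L + int N..U} - {t..t + int N}. Q j w) * B t w"
          unfolding B_def by (rule prod.subset_diff[OF sub]) simp
        finally show ?thesis unfolding A_def by (simp add: mult.assoc)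
      qed
      show "A t (w(t:=a)) = A t w" if "t \<in> T" for t w a
      proof -
        have "pr {L..L + int N - 1} (w(t:=a)) = pr {L..L + int N - 1} w"
          using Trange[OF that] by (intro pr_cong) auto
        moreover have "(\<Prod>j\<in>{L + int N..U} - {t..t + int N}. Q j (w(t:=a))) = (\<Prod>j\<in>{L + int N..U} - {t..t + int N}. Q j w)"
          by (intro prod.cong refl Q_cong) auto
        ultimately show ?thesis unfolding A_def by simp
      qed
      show "\<kappa> \<le> B t w \<and> B t w \<le> 1" if "t \<in> T" for t w
      proof
        have "(\<Prod>j\<in>{t..t + int N}. qmin) \<le> B t w"
          unfolding B_def using qmin(1) Q_bounds by (intro prod_mono) (auto intro: less_imp_le)
        moreover have "(\<Prod>j\<in>{t..t + int N}. qmin) = \<kappa>" unfolding \<kappa>_def by (simp add: nat_add_distrib)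
        ultimately show "\<kappa> \<le> B t w" by simp
        show "B t w \<le> 1" unfolding B_def using qmin(1) Q_bounds
          by (intro prod_le_1) (auto intro: order_trans[OF less_imp_le[OF qmin(1)]])
      qed
      show "B t (w(s:=c)) = B t w" if "t \<in> T" "s \<in> T" "s \<noteq> t" for t s w c
      proof -
        have far: "int N < \<bar>s - t\<bar>" using T(2) that by auto
        show ?thesis unfolding B_def
        proof (intro prod.cong refl Q_cong)
          fix j i assume "j \<in> {t..t + int N}" "j - int N \<le> i" "i \<le> j"
          then have "i \<noteq> s" using far by auto
          then show "(w(s:=c)) i = w i" by simp
        qed
      qed
      show "character (ch t) \<and> ch t \<noteq> (\<lambda>_. 1)" if "t \<in> T" for t
        using chc[of t] that T(1) unfolding S_def char_support_def by auto
      show "0 < \<kappa>" by (rule kpos)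
      show "\<delta> \<le> 1" by (rule dle)
      show "\<forall>(f::'a \<Rightarrow> complex) \<beta>. character f \<and> f \<noteq> (\<lambda>_. 1) \<and> (\<forall>a. \<kappa> \<le> \<beta> a \<and> \<beta> a \<le> 1) \<longrightarrow>
       cmod (\<Sum>a\<in>UNIV. of_real (\<beta> a) * f a) \<le> (1 - \<delta>) * (\<Sum>a\<in>UNIV. \<beta> a)" by (rule dprop)
      show "T \<subseteq> T" by simp
      show "F (w(s:=c)) = F w" if "s \<in> T" for w s c
        unfolding F_def using that by (intro prod.cong refl) auto
      show "cmod (F w) \<le> 1" for w
      proof -
        have "cmod (F w) = (\<Prod>s\<in>S - T. cmod (ch s (w s)))" unfolding F_def by (rule prod_norm[symmetric])
        also have "\<dots> = 1" using chc unfolding character_def by simp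
        finally show ?thesis by simp
      qed
    qed
    have "(1 - \<delta>) ^ card T \<le> (1 - \<delta>) ^ k0" using kT dpos dle by (intro power_decreasing) auto
    then show "norm (integral\<^sup>L \<mu> (char_eval ch)) < eps" using int_eq bound k0 by simp
  qed
qed

end

theorem mainTheorem8:
  fixes \<mu> :: "(int \<Rightarrow> 'a::{ab_group_add, finite}) measure"
    and N :: nat
    and q :: "'a list \<Rightarrow> 'a \<Rightarrow> real"
  assumes "prob_space \<mu>"
    and "sets \<mu> = sets shift_space"
    and "N \<ge> 1"
    and "\<And>a. length a = N \<Longrightarrow> (\<Sum>b\<in>UNIV. q a b) = 1"
    and "shift_invariant \<mu>"
    and "markov_measure N q \<mu>"
    and "\<And>a b. length a = N \<Longrightarrow> q a b \<noteq> 0"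
  shows "harmonically_mixing \<mu>"
proof -
  interpret mk \<mu> N q
    by (rule mk.intro) (use assms in auto)
  show ?thesis by (rule hm)
qed

end
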